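(* Let $f:G\to H$ be a surjective group homomorphism. If there exists a surjective homomorphism $\varphi:H\to K$ onto a finite noncyclic group $K$ such that $f$ admits a local section on $\varphi^{-1}(\langle b\rangle)$ for every $b\in K$ with $b\neq 1$, then $\mathrm{sec}(f)<\infty$. Conversely, if $H$ is abelian and $\mathrm{sec}(f)<\infty$, then such a $K$ and $\varphi$ exist.
   Context: For a homomorphism $f:G\to H$ and a subgroup $L\le H$, a local section of $f$ on $L$ is a homomorphism $s:L\to G$ with $f\circ s=\mathrm{incl}_L$ (the inclusion $L\hookrightarrow H$). The sectional number $\mathrm{sec}(f)$ is the least positive integer $m$ such that there exist proper subgroups $H_1,\ldots,H_m$ of $H$ with $H=H_1\cup\cdots\cup H_m$ and such that $f$ admits a local section on each $H_i$; $\mathrm{sec}(f)=\infty$ if no such $m$ exists. *)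

theory Defs
  imports "HOL-Algebra.Algebra" "HOL-Library.Extended_Nat"
begin

definition has_local_section ::
  "('a, 'c) monoid_scheme \<Rightarrow> ('b, 'd) monoid_scheme \<Rightarrow> ('a \<Rightarrow> 'b) \<Rightarrow> 'b set \<Rightarrow> bool" where
  "has_local_section G H f L \<longleftrightarrow>
     (\<exists>s. s \<in> hom (H\<lparr>carrier := L\<rparr>) G \<and> (\<forall>x \<in> L. f (s x) = x))"

text \<open>Sectional number: least m > 0 such that H is a union of m proper subgroups,
  on each of which f admits a local section; \<infinity> if none exists (Inf {} = \<infinity>).\<close>
definition sectional_number ::
  "('a, 'c) monoid_scheme \<Rightarrow> ('b, 'd) monoid_scheme \<Rightarrow> ('a \<Rightarrow> 'b) \<Rightarrow> enat" where
  "sectional_number G H f = Inf {enat m | m. m > 0 \<and>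
     (\<exists>Hs :: nat \<Rightarrow> 'b set.
        (\<forall>i < m. subgroup (Hs i) H \<and> Hs i \<noteq> carrier H \<and> has_local_section G H f (Hs i)) \<and>
        (\<Union>i < m. Hs i) = carrier H)}"

end

theory Submission
  imports Defs
begin


lemma (in group) rcos_eq_if:
  assumes "subgroup A G" "x \<in> carrier G" "g \<in> carrier G" "x \<otimes> inv g \<in> A"
  shows "A #> x = A #> g"
proof -
  have "x \<in> A #> g" using subgroup.rcos_module[OF assms(1) is_group assms(3,2)] assms(4) by simp
  thus ?thesis using repr_independence[of x A g] assms by simp
qed

lemma (in comm_group) t1: "a \<in> carrier G \<Longrightarrow> g \<in> carrier G \<Longrightarrow> x \<in> carrier G \<Longrightarrow> inv a \<otimes> (x \<otimes> a \<otimes> inv g) = x \<otimes> inv g"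
proof -
  assume c: "a \<in> carrier G" "g \<in> carrier G" "x \<in> carrier G"
  have "x \<otimes> a \<otimes> inv g = a \<otimes> (x \<otimes> inv g)" using c by (simp add: m_ac)
  then have "inv a \<otimes> (x \<otimes> a \<otimes> inv g) = (inv a \<otimes> a) \<otimes> (x \<otimes> inv g)" using c by (simp add: m_assoc[symmetric])
  also have "\<dots> = x \<otimes> inv g" using c by simp
  finally show ?thesis .
qed
lemma (in comm_group) t2: "y \<in> carrier G \<Longrightarrow> g \<in> carrier G \<Longrightarrow> x \<in> carrier G \<Longrightarrow> h \<in> carrier G \<Longrightarrow> y \<otimes> inv (g \<otimes> inv x \<otimes> h) = (x \<otimes> (y \<otimes> inv g)) \<otimes> inv h"
  by (simp add: inv_mult m_ac)

lemma (in comm_group) neumann_weak: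
  assumes "finite S" "S \<subseteq> carrier G \<times> {B. subgroup B G}"
    "\<forall>y\<in>carrier G. \<exists>(g,B)\<in>S. y \<otimes> inv g \<in> B"
  shows "\<exists>B\<in>snd ` S. finite (rcosets B)"
  using assms
proof (induct "card (snd ` S)" arbitrary: S rule: less_induct)
  case less
  obtain g0 A where gA: "(g0,A) \<in> S" using bspec[OF less.prems(3) one_closed] by auto
  show ?case
  proof (cases "finite (rcosets A)")
    case True
    have "A \<in> snd ` S" using gA by (metis imageI snd_conv)
    then show ?thesis using True by blast
  next
    case False
    have "finite ((\<lambda>(g,B). A #> g) ` S)" using less.prems(1) by simp
    then have "\<not> rcosets A \<subseteq> (\<lambda>(g,B). A #> g) ` S" using False finite_subset by blast
    then obtain C where C: "C \<in> rcosets A" "C \<notin> (\<lambda>(g,B). A #> g) ` S"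
      by blast
    then obtain x where x: "x \<in> carrier G" "C = A #> x" unfolding RCOSETS_def by blast
    have sA: "subgroup A G" using subsetD[OF less.prems(2) gA] by simp
    have claim: "\<forall>a\<in>A. \<forall>g. (g,A) \<in> S \<longrightarrow> (x \<otimes> a) \<otimes> inv g \<notin> A"
    proof (intro ballI allI impI notI)
      fix a g assume a: "a \<in> A" and gS: "(g,A) \<in> S" and m: "x \<otimes> a \<otimes> inv g \<in> A"
      have ac: "a \<in> carrier G" using subgroup.mem_carrier[OF sA a] .
      have gc: "g \<in> carrier G" using subsetD[OF less.prems(2) gS] by simp
      have "inv a \<otimes> (x \<otimes> a \<otimes> inv g) \<in> A" using a m sA
        by (simp add: subgroup.m_closed subgroup.m_inv_closed)
      moreover have "inv a \<otimes> (x \<otimes> a \<otimes> inv g) = x \<otimes> inv g"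
        using ac gc x(1) by (rule t1)
      ultimately have "A #> x = A #> g" using rcos_eq_if[OF sA x(1) gc] by simp
      then have "C \<in> (\<lambda>(g,B). A #> g) ` S" using x gS by (metis (no_types, lifting) case_prod_conv image_eqI)
      then show False using C by blast
    qed
    define P where "P = {qr \<in> S \<times> S. snd (fst qr) = A \<and> snd (snd qr) \<noteq> A}"
    define S' where "S' = (\<lambda>qr. (fst (fst qr) \<otimes> inv x \<otimes> fst (snd qr), snd (snd qr))) ` P
       \<union> {p\<in>S. snd p \<noteq> A}"
    have sub: "snd ` S' \<subseteq> snd ` S - {A}"
    proof
      fix B assume "B \<in> snd ` S'"
      then obtain p where p: "p \<in> S'" "B = snd p" by blast
      show "B \<in> snd ` S - {A}"
      proof (cases "p \<in> S \<and> snd p \<noteq> A")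
        case True then show ?thesis using p by blast
      next
        case False
        then obtain qr where "qr \<in> P" "p = (fst (fst qr) \<otimes> inv x \<otimes> fst (snd qr), snd (snd qr))"
          using p(1) unfolding S'_def by blast
        then show ?thesis using p(2) unfolding P_def by auto
      qed
    qed
    have lt: "card (snd ` S') < card (snd ` S)"
    proof (rule psubset_card_mono)
      show "finite (snd ` S)" using less.prems(1) by (rule finite_imageI)
      have "A \<in> snd ` S" using gA by (metis imageI snd_conv)
      moreover have "A \<notin> snd ` S'" using sub by (meson DiffD2 insertI1 subsetD)
      moreover have "snd ` S' \<subseteq> snd ` S" using sub by (meson Diff_subset subset_trans)
      ultimately show "snd ` S' \<subset> snd ` S" by (metis psubsetI)
    qed
    have fin1: "finite P"
    proof (rule finite_subset)
      show "P \<subseteq> S \<times> S" unfolding P_def by blast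
      show "finite (S \<times> S)" by (intro finite_cartesian_product less.prems(1))
    qed
    have fin: "finite S'" unfolding S'_def using fin1 less.prems(1) by simp
    have S'sub: "S' \<subseteq> carrier G \<times> {B. subgroup B G}"
    proof
      fix p assume "p \<in> S'"
      show "p \<in> carrier G \<times> {B. subgroup B G}"
      proof (cases "p \<in> S")
        case True then show ?thesis using less.prems(2) by blast
      next
        case False
        then obtain qr where qr: "qr \<in> P" "p = (fst (fst qr) \<otimes> inv x \<otimes> fst (snd qr), snd (snd qr))"
          using \<open>p \<in> S'\<close> unfolding S'_def by blast
        then have "fst qr \<in> S" "snd qr \<in> S" unfolding P_def by auto
        then have "fst qr \<in> carrier G \<times> {B. subgroup B G}" "snd qr \<in> carrier G \<times> {B. subgroup B G}"
          using less.prems(2) by blast+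
        then show ?thesis using qr(2) x(1) by (simp add: mem_Times_iff)
      qed
    qed
    have cov: "\<forall>y\<in>carrier G. \<exists>(g,B)\<in>S'. y \<otimes> inv g \<in> B"
    proof
      fix y assume y: "y \<in> carrier G"
      then obtain g B where gB: "(g,B) \<in> S" "y \<otimes> inv g \<in> B" using bspec[OF less.prems(3) y] by auto
      have gc: "g \<in> carrier G" using subsetD[OF less.prems(2) gB(1)] by simp
      show "\<exists>(g,B)\<in>S'. y \<otimes> inv g \<in> B"
      proof (cases "B = A")
        case False
        then have "(g,B) \<in> S'" using gB unfolding S'_def by simp
        then show ?thesis using gB by blast
      next
        case True
        define a where "a = y \<otimes> inv g"
        have a: "a \<in> A" using gB True a_def by simp
        have ac: "a \<in> carrier G" using subgroup.mem_carrier[OF sA a] .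
        obtain h B' where hB: "(h,B') \<in> S" "(x \<otimes> a) \<otimes> inv h \<in> B'"
          using bspec[OF less.prems(3) m_closed[OF x(1) ac]] by auto
        have hc: "h \<in> carrier G" using subsetD[OF less.prems(2) hB(1)] by simp
        have "B' \<noteq> A" using claim a hB by blast
        have inP: "((g,A),(h,B')) \<in> P" unfolding P_def using gB True hB \<open>B' \<noteq> A\<close> by simp
        have mem: "(g \<otimes> inv x \<otimes> h, B') \<in> S'" unfolding S'_def
          by (rule UnI1, rule image_eqI[OF _ inP]) simp
        have "y \<otimes> inv (g \<otimes> inv x \<otimes> h) = (x \<otimes> a) \<otimes> inv h"
          unfolding a_def using y gc x(1) hc by (rule t2)
        then have "y \<otimes> inv (g \<otimes> inv x \<otimes> h) \<in> B'" using hB(2) by simp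
        then show ?thesis using mem by (intro bexI[where x="(g \<otimes> inv x \<otimes> h, B')"]) simp_all
      qed
    qed
    obtain B where "B \<in> snd ` S'" "finite (rcosets B)" using less.hyps[OF lt fin S'sub cov] by blast
    then show ?thesis using sub by blast
  qed
qed

lemma (in comm_group) t3: "y \<in> carrier G \<Longrightarrow> r \<in> carrier G \<Longrightarrow> h \<in> carrier G \<Longrightarrow> y \<otimes> inv (r \<otimes> inv h) = h \<otimes> (y \<otimes> inv r)"
  by (simp add: inv_mult m_ac)

lemma (in group) rcosets_Inter_finite:
  assumes "finite J" "J \<noteq> {}" "\<forall>i\<in>J. subgroup (Hs i) G \<and> finite (rcosets (Hs i))"
  shows "finite (rcosets (\<Inter>i\<in>J. Hs i))"
proof -
  let ?D = "\<Inter>i\<in>J. Hs i"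
  have eq: "?D #> g = (\<Inter>i\<in>J. Hs i #> g)" if g: "g \<in> carrier G" for g
  proof (intro equalityI subsetI)
    fix z assume z: "z \<in> ?D #> g"
    show "z \<in> (\<Inter>i\<in>J. Hs i #> g)"
    proof
      fix i assume i: "i \<in> J"
      obtain d where "d \<in> ?D" "z = d \<otimes> g" using z unfolding r_coset_def by blast
      thus "z \<in> Hs i #> g" using i unfolding r_coset_def by blast
    qed
  next
    fix z assume z: "z \<in> (\<Inter>i\<in>J. Hs i #> g)"
    obtain i0 where i0: "i0 \<in> J" using assms(2) by blast
    have "z \<in> Hs i0 #> g" using z i0 by blast
    moreover have "Hs i0 #> g \<subseteq> carrier G" using r_coset_subset_G[OF _ g] assms(3) i0 subgroup.subset by blast
    ultimately have zc: "z \<in> carrier G" by blast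
    have "\<forall>i\<in>J. z \<otimes> inv g \<in> Hs i"
    proof
      fix i assume i: "i \<in> J"
      then have "subgroup (Hs i) G" using assms(3) by blast
      moreover have "z \<in> Hs i #> g" using z i by blast
      ultimately show "z \<otimes> inv g \<in> Hs i" using subgroup.rcos_module[OF _ is_group g zc] by blast
    qed
    hence m: "z \<otimes> inv g \<in> ?D" by blast
    have "z = (z \<otimes> inv g) \<otimes> g" using zc g by (simp add: m_assoc)
    then show "z \<in> ?D #> g" using m unfolding r_coset_def by blast
  qed
  have "rcosets ?D \<subseteq> (\<lambda>F. \<Inter>i\<in>J. F i) ` (PiE J (\<lambda>i. rcosets (Hs i)))"
  proof
    fix C assume "C \<in> rcosets ?D"
    then obtain g where g: "g \<in> carrier G" "C = ?D #> g" unfolding RCOSETS_def by blast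
    show "C \<in> (\<lambda>F. \<Inter>i\<in>J. F i) ` (PiE J (\<lambda>i. rcosets (Hs i)))"
    proof (rule image_eqI[where x="\<lambda>i\<in>J. Hs i #> g"])
      show "(\<lambda>i\<in>J. Hs i #> g) \<in> PiE J (\<lambda>i. rcosets (Hs i))" using g unfolding RCOSETS_def by auto
      show "C = (\<Inter>i\<in>J. (\<lambda>i\<in>J. Hs i #> g) i)" using eq[OF g(1)] g(2) by simp
    qed
  qed
  moreover have "finite (PiE J (\<lambda>i. rcosets (Hs i)))" using assms(1,3) by (intro finite_PiE) auto
  ultimately show ?thesis using finite_subset by blast
qed

lemma (in comm_group) neumann_strong:
  assumes "finite I" "\<forall>i\<in>I. subgroup (Hs i) G" "carrier G = (\<Union>i\<in>I. Hs i)"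
  shows "carrier G = (\<Union>i\<in>{i\<in>I. finite (rcosets (Hs i))}. Hs i)"
proof -
  define J where "J = {i\<in>I. finite (rcosets (Hs i))}"
  have Jne: "J \<noteq> {}"
  proof -
    have "\<exists>B\<in>snd ` ((\<lambda>i. (\<one>, Hs i)) ` I). finite (rcosets B)"
    proof (rule neumann_weak)
      show "finite ((\<lambda>i. (\<one>, Hs i)) ` I)" using assms(1) by simp
      show "(\<lambda>i. (\<one>, Hs i)) ` I \<subseteq> carrier G \<times> {B. subgroup B G}" using assms(2) by auto
      show "\<forall>y\<in>carrier G. \<exists>(g,B)\<in>(\<lambda>i. (\<one>, Hs i)) ` I. y \<otimes> inv g \<in> B"
      proof
        fix y assume y: "y \<in> carrier G"
        then obtain i where i: "i\<in>I" "y \<in> Hs i" using assms(3) by blast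
        have "(\<one>, Hs i) \<in> (\<lambda>i. (\<one>, Hs i)) ` I" using i(1) by (rule imageI)
        moreover have "y \<otimes> inv \<one> \<in> Hs i" using i y by simp
        ultimately show "\<exists>(g,B)\<in>(\<lambda>i. (\<one>, Hs i)) ` I. y \<otimes> inv g \<in> B"
          by (intro bexI[where x="(\<one>, Hs i)"]) simp_all
      qed
    qed
    then obtain i where "i \<in> I" "finite (rcosets (Hs i))" by auto
    then show ?thesis unfolding J_def by blast
  qed
  have finJ: "finite J" using assms(1) unfolding J_def by simp
  show ?thesis unfolding J_def[symmetric]
  proof (rule ccontr)
    assume ne: "carrier G \<noteq> (\<Union>i\<in>J. Hs i)"
    have "(\<Union>i\<in>J. Hs i) \<subseteq> carrier G" using assms(3) unfolding J_def by blast
    with ne obtain h0 where h0: "h0 \<in> carrier G" "\<forall>i\<in>J. h0 \<notin> Hs i" by blast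
    define D where "D = (\<Inter>i\<in>J. Hs i)"
    have sD: "subgroup D G" unfolding D_def
      by (rule subgroups_Inter) (use Jne assms(2) J_def in auto)
    have finD: "finite (rcosets D)" unfolding D_def
      by (rule rcosets_Inter_finite[OF finJ Jne]) (use assms(2) J_def in auto)
    define rep where "rep C = (SOME r. r \<in> carrier G \<and> C = D #> r)" for C
    have rep: "rep C \<in> carrier G \<and> C = D #> rep C" if "C \<in> rcosets D" for C
    proof -
      have "\<exists>r. r \<in> carrier G \<and> C = D #> r" using that unfolding RCOSETS_def by blast
      then show ?thesis unfolding rep_def by (rule someI_ex)
    qed
    define S where "S = (\<lambda>Cj. (rep (fst Cj) \<otimes> inv h0, Hs (snd Cj))) ` ((rcosets D) \<times> (I - J))"
    have "\<exists>B\<in>snd ` S. finite (rcosets B)"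
    proof (rule neumann_weak)
      show "finite S" unfolding S_def using finD assms(1) by simp
      show "S \<subseteq> carrier G \<times> {B. subgroup B G}"
      proof
        fix p assume "p \<in> S"
        then obtain Cj where Cj: "Cj \<in> (rcosets D) \<times> (I - J)" "p = (rep (fst Cj) \<otimes> inv h0, Hs (snd Cj))"
          unfolding S_def by blast
        then have "rep (fst Cj) \<in> carrier G" using rep by auto
        moreover have "subgroup (Hs (snd Cj)) G" using Cj(1) assms(2) by auto
        ultimately show "p \<in> carrier G \<times> {B. subgroup B G}" using Cj(2) h0(1) by simp
      qed
      show "\<forall>y\<in>carrier G. \<exists>(g,B)\<in>S. y \<otimes> inv g \<in> B"
      proof
        fix y assume y: "y \<in> carrier G"
        define C where "C = D #> y"
        have C: "C \<in> rcosets D" unfolding C_def using y by (rule rcosetsI[OF subgroup.subset[OF sD]])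
        define r where "r = rep C"
        have r: "r \<in> carrier G" "C = D #> r" using rep[OF C] r_def by auto
        have "y \<in> D #> y" using y sD by (rule rcos_self)
        then have "y \<in> D #> r" using r C_def by simp
        then have d: "y \<otimes> inv r \<in> D" using subgroup.rcos_module[OF sD is_group r(1) y] by simp
        have dc: "y \<otimes> inv r \<in> carrier G" using y r by simp
        have hc: "h0 \<otimes> (y \<otimes> inv r) \<in> carrier G" using h0 dc by simp
        then obtain j where j: "j \<in> I" "h0 \<otimes> (y \<otimes> inv r) \<in> Hs j" using assms(3) by blast
        have jJ: "j \<notin> J"
        proof
          assume jJ: "j \<in> J"
          have sj: "subgroup (Hs j) G" using j(1) assms(2) by blast
          have dj: "y \<otimes> inv r \<in> Hs j" using d jJ unfolding D_def by blast
          have "h0 \<otimes> (y \<otimes> inv r) \<otimes> inv (y \<otimes> inv r) \<in> Hs j"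
            using sj j(2) dj by (simp add: subgroup.m_closed subgroup.m_inv_closed)
          moreover have "h0 \<otimes> (y \<otimes> inv r) \<otimes> inv (y \<otimes> inv r) = h0" using h0(1) dc by (simp add: m_assoc)
          ultimately show False using h0(2) jJ by simp
        qed
        have mem: "(r \<otimes> inv h0, Hs j) \<in> S" unfolding S_def
          by (rule image_eqI[where x="(C, j)"]) (use r_def C j(1) jJ in simp_all)
        have "y \<otimes> inv (r \<otimes> inv h0) \<in> Hs j" using t3[OF y r(1) h0(1)] j(2) by simp
        then show "\<exists>(g,B)\<in>S. y \<otimes> inv g \<in> B" using mem by (intro bexI[where x="(r \<otimes> inv h0, Hs j)"]) simp_all
      qed
    qed
    then obtain p where p: "p \<in> S" "finite (rcosets (snd p))" by blast
    then obtain Cj where Cj: "Cj \<in> (rcosets D) \<times> (I - J)" "p = (rep (fst Cj) \<otimes> inv h0, Hs (snd Cj))"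
      unfolding S_def by blast
    then have "snd Cj \<in> J" using p(2) unfolding J_def by auto
    then show False using Cj(1) by auto
  qed
qed

lemma enat_Inf_lt_iff: "Inf {enat m | m. P m} < \<infinity> \<longleftrightarrow> (\<exists>m. P m)"
proof
  assume lt: "Inf {enat m | m. P m} < \<infinity>"
  show "\<exists>m. P m"
  proof (rule ccontr)
    assume "\<not> (\<exists>m. P m)"
    then have "{enat m | m. P m} = {}" by blast
    then have "Inf {enat m | m. P m} = \<infinity>" by (simp add: top_enat_def)
    with lt show False by simp
  qed
next
  assume "\<exists>m. P m"
  then obtain m where "P m" by blast
  then have "Inf {enat m | m. P m} \<le> enat m" by (intro Inf_lower) blast
  also have "enat m < \<infinity>" by simp
  finally show "Inf {enat m | m. P m} < \<infinity>" .
qed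

lemma preimage_subgroup:
  assumes "group H" "group K" "\<phi> \<in> hom H K" "subgroup S K"
  shows "subgroup {h \<in> carrier H. \<phi> h \<in> S} H"
proof -
  interpret gh: group_hom H K \<phi> using assms by (simp add: group_hom_def group_hom_axioms_def)
  show ?thesis
  proof (rule gh.G.subgroupI)
    show "{h \<in> carrier H. \<phi> h \<in> S} \<subseteq> carrier H" by blast
    have "\<phi> \<one>\<^bsub>H\<^esub> \<in> S" using subgroup.one_closed[OF assms(4)] by simp
    then show "{h \<in> carrier H. \<phi> h \<in> S} \<noteq> {}" by blast
    fix a assume a: "a \<in> {h \<in> carrier H. \<phi> h \<in> S}"
    then show "inv\<^bsub>H\<^esub> a \<in> {h \<in> carrier H. \<phi> h \<in> S}"
      using subgroup.m_inv_closed[OF assms(4)] by simp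
  next
    fix a b assume "a \<in> {h \<in> carrier H. \<phi> h \<in> S}" "b \<in> {h \<in> carrier H. \<phi> h \<in> S}"
    then show "a \<otimes>\<^bsub>H\<^esub> b \<in> {h \<in> carrier H. \<phi> h \<in> S}"
      using subgroup.m_closed[OF assms(4)] by simp
  qed
qed

lemma hom_restrict_sub:
  assumes "s \<in> hom (H\<lparr>carrier := A\<rparr>) G" "B \<subseteq> A"
  shows "s \<in> hom (H\<lparr>carrier := B\<rparr>) G"
proof -
  have 1: "s \<in> A \<rightarrow> carrier G" and 2: "\<forall>x\<in>A. \<forall>y\<in>A. s (x \<otimes>\<^bsub>H\<^esub> y) = s x \<otimes>\<^bsub>G\<^esub> s y"
    using assms(1) unfolding hom_def by simp_all
  have "s \<in> B \<rightarrow> carrier G" using 1 assms(2) unfolding Pi_def by blast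
  moreover have "\<forall>x\<in>B. \<forall>y\<in>B. s (x \<otimes>\<^bsub>H\<^esub> y) = s x \<otimes>\<^bsub>G\<^esub> s y" using 2 assms(2) by blast
  ultimately show ?thesis unfolding hom_def by simp
qed

lemma local_section_mono:
  assumes "has_local_section G H f A" "B \<subseteq> A"
  shows "has_local_section G H f B"
proof -
  obtain s where s: "s \<in> hom (H\<lparr>carrier := A\<rparr>) G" "\<forall>x \<in> A. f (s x) = x"
    using assms(1) unfolding has_local_section_def by blast
  have "s \<in> hom (H\<lparr>carrier := B\<rparr>) G" using s(1) assms(2) by (rule hom_restrict_sub)
  moreover have "\<forall>x \<in> B. f (s x) = x" using s(2) assms(2) by blast
  ultimately show ?thesis unfolding has_local_section_def by blast
qed

lemma part1:
  fixes G :: "'a monoid" and H :: "'b monoid" and f :: "'a \<Rightarrow> 'b" and K :: "'c monoid"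
  assumes gH: "group H" and gK: "group K" and finK: "finite (carrier K)" and nc: "\<not> cyclic_group K"
    and hom: "\<phi> \<in> hom H K" and surj: "\<phi> ` carrier H = carrier K"
    and sec: "\<forall>b \<in> carrier K. b \<noteq> \<one>\<^bsub>K\<^esub> \<longrightarrow>
               has_local_section G H f {h \<in> carrier H. \<phi> h \<in> generate K {b}}"
  shows "sectional_number G H f < \<infinity>"
proof -
  interpret K: group K by (rule gK)
  interpret gh: group_hom H K \<phi> using gH gK hom by (simp add: group_hom_def group_hom_axioms_def)
  define E where "E = carrier K - {\<one>\<^bsub>K\<^esub>}"
  define L where "L b = {h \<in> carrier H. \<phi> h \<in> generate K {b}}" for b
  have finE: "finite E" unfolding E_def using finK by simp
  have Ene: "E \<noteq> {}"
  proof
    assume "E = {}"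
    then have c1: "carrier K = {\<one>\<^bsub>K\<^esub>}" unfolding E_def by auto
    have "carrier K = range (\<lambda>n::int. \<one>\<^bsub>K\<^esub> [^]\<^bsub>K\<^esub> n)" using c1 by auto
    then have "cyclic_group K" using K.cyclic_group by blast
    with nc show False by simp
  qed
  have props: "subgroup (L b) H \<and> L b \<noteq> carrier H \<and> has_local_section G H f (L b)" if b: "b \<in> E" for b
  proof (intro conjI)
    have bc: "b \<in> carrier K" using b unfolding E_def by blast
    have sg: "subgroup (generate K {b}) K" using bc by (intro K.generate_is_subgroup) simp
    show "subgroup (L b) H" unfolding L_def by (rule preimage_subgroup[OF gH gK hom sg])
    show "has_local_section G H f (L b)" using sec bc b unfolding E_def L_def by blast
    show "L b \<noteq> carrier H"
    proof
      assume eq: "L b = carrier H"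
      have "carrier K \<subseteq> generate K {b}"
      proof
        fix c assume "c \<in> carrier K"
        then obtain h where h: "h \<in> carrier H" "c = \<phi> h" using surj by blast
        then show "c \<in> generate K {b}" using eq unfolding L_def by blast
      qed
      then have "carrier K = {b [^]\<^bsub>K\<^esub> (k::int) | k. k \<in> UNIV}"
        using K.generate_pow[OF bc] K.generate_incl[of "{b}"] bc by auto
      then have "carrier K = range (\<lambda>n::int. b [^]\<^bsub>K\<^esub> n)" by auto
      then have "cyclic_group K" using K.cyclic_group bc by blast
      with nc show False by simp
    qed
  qed
  have cover: "(\<Union>b\<in>E. L b) = carrier H"
  proof
    show "(\<Union>b\<in>E. L b) \<subseteq> carrier H" unfolding L_def by blast
    show "carrier H \<subseteq> (\<Union>b\<in>E. L b)"
    proof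
      fix h assume h: "h \<in> carrier H"
      show "h \<in> (\<Union>b\<in>E. L b)"
      proof (cases "\<phi> h = \<one>\<^bsub>K\<^esub>")
        case True
        obtain b where b: "b \<in> E" using Ene by blast
        have "\<one>\<^bsub>K\<^esub> \<in> generate K {b}" by (rule generate.one)
        then have "h \<in> L b" using h True unfolding L_def by simp
        then show ?thesis using b by blast
      next
        case False
        have "\<phi> h \<in> carrier K" using h by simp
        then have b: "\<phi> h \<in> E" using False unfolding E_def by blast
        have "\<phi> h \<in> generate K {\<phi> h}" by (rule generate.incl) simp
        then have "h \<in> L (\<phi> h)" using h unfolding L_def by simp
        then show ?thesis using b by blast
      qed
    qed
  qed
  obtain e where e: "bij_betw e {0..<card E} E" using ex_bij_betw_nat_finite[OF finE] by blast
  have pos: "card E > 0" using finE Ene by (simp add: card_gt_0_iff)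
  define Hs where "Hs i = L (e i)" for i
  have "\<forall>i < card E. subgroup (Hs i) H \<and> Hs i \<noteq> carrier H \<and> has_local_section G H f (Hs i)"
  proof (intro allI impI)
    fix i assume "i < card E"
    then have "e i \<in> E" using e unfolding bij_betw_def by auto
    then show "subgroup (Hs i) H \<and> Hs i \<noteq> carrier H \<and> has_local_section G H f (Hs i)"
      unfolding Hs_def by (rule props)
  qed
  moreover have "(\<Union>i < card E. Hs i) = carrier H"
  proof -
    have "e ` {..<card E} = E" using e unfolding bij_betw_def by (simp add: atLeast0LessThan)
    then have "(\<Union>i < card E. Hs i) = (\<Union>b\<in>E. L b)" unfolding Hs_def by (metis image_image UNION_singleton_eq_range SUP_image)
    then show ?thesis using cover by simp
  qed
  ultimately have "\<exists>m. m > 0 \<and> (\<exists>Hs :: nat \<Rightarrow> 'b set.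
        (\<forall>i < m. subgroup (Hs i) H \<and> Hs i \<noteq> carrier H \<and> has_local_section G H f (Hs i)) \<and>
        (\<Union>i < m. Hs i) = carrier H)" using pos by blast
  then show ?thesis unfolding sectional_number_def by (subst enat_Inf_lt_iff)
qed

lemma part2:
  fixes G :: "'a monoid" and H :: "'b monoid" and f :: "'a \<Rightarrow> 'b"
  assumes cH: "comm_group H" and sn: "sectional_number G H f < \<infinity>"
  shows "\<exists>(K :: 'b set monoid) \<phi>.
            group K \<and> finite (carrier K) \<and> \<not> cyclic_group K \<and>
            \<phi> \<in> hom H K \<and> \<phi> ` carrier H = carrier K \<and>
            (\<forall>b \<in> carrier K. b \<noteq> \<one>\<^bsub>K\<^esub> \<longrightarrow>
               has_local_section G H f {h \<in> carrier H. \<phi> h \<in> generate K {b}})"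
proof -
  interpret comm_group H by (rule cH)
  have ex: "\<exists>m. m > 0 \<and> (\<exists>Hs :: nat \<Rightarrow> 'b set.
        (\<forall>i < m. subgroup (Hs i) H \<and> Hs i \<noteq> carrier H \<and> has_local_section G H f (Hs i)) \<and>
        (\<Union>i < m. Hs i) = carrier H)"
    using sn unfolding sectional_number_def by (subst (asm) enat_Inf_lt_iff)
  then obtain m where mex: "m > 0 \<and> (\<exists>Hs :: nat \<Rightarrow> 'b set.
        (\<forall>i < m. subgroup (Hs i) H \<and> Hs i \<noteq> carrier H \<and> has_local_section G H f (Hs i)) \<and>
        (\<Union>i < m. Hs i) = carrier H)" ..
  then have "\<exists>Hs :: nat \<Rightarrow> 'b set.
        (\<forall>i < m. subgroup (Hs i) H \<and> Hs i \<noteq> carrier H \<and> has_local_section G H f (Hs i)) \<and>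
        (\<Union>i < m. Hs i) = carrier H" by (rule conjunct2)
  then obtain Hs :: "nat \<Rightarrow> 'b set" where HsP:
    "(\<forall>i < m. subgroup (Hs i) H \<and> Hs i \<noteq> carrier H \<and> has_local_section G H f (Hs i)) \<and>
        (\<Union>i < m. Hs i) = carrier H" ..
  have Hs: "\<forall>i < m. subgroup (Hs i) H \<and> Hs i \<noteq> carrier H \<and> has_local_section G H f (Hs i)"
    using HsP by (rule conjunct1)
  have cov: "(\<Union>i < m. Hs i) = carrier H" using HsP by (rule conjunct2)
  define J where "J = {i\<in>{..<m}. finite (rcosets\<^bsub>H\<^esub> (Hs i))}"
  have covJ: "carrier H = (\<Union>i\<in>J. Hs i)" unfolding J_def
    by (rule neumann_strong) (use Hs cov in auto)
  have Jne: "J \<noteq> {}" using covJ one_closed by blast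
  have finJ: "finite J" unfolding J_def by simp
  have sJ: "subgroup (Hs i) H" if "i \<in> J" for i using that Hs unfolding J_def by blast
  define N where "N = (\<Inter>i\<in>J. Hs i)"
  have sN: "subgroup N H" unfolding N_def
    by (rule subgroups_Inter) (use Jne sJ in auto)
  have finN: "finite (rcosets\<^bsub>H\<^esub> N)" unfolding N_def
    by (rule rcosets_Inter_finite[OF finJ Jne]) (use sJ J_def in auto)
  have nN: "N \<lhd> H" using sN by (rule subgroup_imp_normal)
  define K where "K = H Mod N"
  define \<phi> where "\<phi> = (\<lambda>a. N #>\<^bsub>H\<^esub> a)"
  have gK: "group K" unfolding K_def by (rule normal.factorgroup_is_group[OF nN])
  have cK: "carrier K = rcosets\<^bsub>H\<^esub> N" unfolding K_def FactGroup_def by simp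
  have hom: "\<phi> \<in> hom H K" unfolding \<phi>_def K_def by (rule normal.r_coset_hom_Mod[OF nN])
  have surj: "\<phi> ` carrier H = carrier K" unfolding cK \<phi>_def RCOSETS_def by blast
  interpret K: group K by (rule gK)
  interpret gh: group_hom H K \<phi> using is_group gK hom by (simp add: group_hom_def group_hom_axioms_def)
  have backw: "\<And>i z. i \<in> J \<Longrightarrow> z \<in> carrier H \<Longrightarrow> \<phi> z \<in> \<phi> ` Hs i \<Longrightarrow> z \<in> Hs i"
  proof -
    fix i z assume hi: "i \<in> J" and zc: "z \<in> carrier H" and hm: "\<phi> z \<in> \<phi> ` Hs i"
    obtain x where x: "x \<in> Hs i" "\<phi> z = \<phi> x" using hm by blast
    have "z \<in> N #>\<^bsub>H\<^esub> z" using zc sN by (rule rcos_self)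
    then have "z \<in> N #>\<^bsub>H\<^esub> x" using x(2) unfolding \<phi>_def by simp
    then obtain n where n: "n \<in> N" "z = n \<otimes>\<^bsub>H\<^esub> x" unfolding r_coset_def by blast
    have "n \<in> Hs i" using n(1) hi unfolding N_def by blast
    then show "z \<in> Hs i" using n(2) x(1) subgroup.m_closed[OF sJ[OF hi]] by simp
  qed
  have key: "\<exists>i\<in>J. {h \<in> carrier H. \<phi> h \<in> generate K {b}} \<subseteq> Hs i" if b: "b \<in> carrier K" for b
  proof -
    obtain h where h: "h \<in> carrier H" "b = \<phi> h" using b surj by blast
    then obtain i where i: "i \<in> J" "h \<in> Hs i" using covJ by blast
    have "subgroup (\<phi> ` Hs i) K" by (rule gh.subgroup_img_is_subgroup[OF sJ[OF i(1)]])
    moreover have "{b} \<subseteq> \<phi> ` Hs i" using h(2) i(2) by blast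
    ultimately have "generate K {b} \<subseteq> \<phi> ` Hs i" using K.generate_subgroup_incl by blast
    then have "{h \<in> carrier H. \<phi> h \<in> generate K {b}} \<subseteq> Hs i" using backw[OF i(1)] by blast
    then show ?thesis using i(1) by blast
  qed
  have finK: "finite (carrier K)" using finN cK by simp
  have nc: "\<not> cyclic_group K"
  proof
    assume "cyclic_group K"
    then obtain x where x: "x \<in> carrier K" "subgroup_generated K {x} = K" unfolding cyclic_group_def by blast
    have "carrier K = generate K {x}"
      using arg_cong[OF x(2), of carrier] x(1) by (simp add: carrier_subgroup_generated)
    moreover obtain i where i: "i \<in> J" "{h \<in> carrier H. \<phi> h \<in> generate K {x}} \<subseteq> Hs i" using key[OF x(1)] by blast
    ultimately have "carrier H \<subseteq> Hs i" by auto
    moreover have "Hs i \<subseteq> carrier H" using sJ[OF i(1)] subgroup.subset by blast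
    moreover have "Hs i \<noteq> carrier H" using i(1) Hs unfolding J_def by blast
    ultimately show False by blast
  qed
  have secK: "\<forall>b \<in> carrier K. b \<noteq> \<one>\<^bsub>K\<^esub> \<longrightarrow>
               has_local_section G H f {h \<in> carrier H. \<phi> h \<in> generate K {b}}"
  proof (intro ballI impI)
    fix b assume b: "b \<in> carrier K"
    obtain i where i: "i \<in> J" "{h \<in> carrier H. \<phi> h \<in> generate K {b}} \<subseteq> Hs i" using key[OF b] by blast
    have "has_local_section G H f (Hs i)" using i(1) Hs unfolding J_def by blast
    then show "has_local_section G H f {h \<in> carrier H. \<phi> h \<in> generate K {b}}" using i(2) by (rule local_section_mono)
  qed
  show ?thesis using gK finK nc hom surj secK by blast
qed


theorem theorem2p14:
  fixes G :: "'a monoid" and H :: "'b monoid" and f :: "'a \<Rightarrow> 'b"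
  assumes "group G" and "group H"
    and "f \<in> hom G H" and "f ` carrier G = carrier H"
  shows "(\<forall>(K :: 'c monoid) \<phi>.
            group K \<and> finite (carrier K) \<and> \<not> cyclic_group K \<and>
            \<phi> \<in> hom H K \<and> \<phi> ` carrier H = carrier K \<and>
            (\<forall>b \<in> carrier K. b \<noteq> \<one>\<^bsub>K\<^esub> \<longrightarrow>
               has_local_section G H f {h \<in> carrier H. \<phi> h \<in> generate K {b}})
          \<longrightarrow> sectional_number G H f < \<infinity>)
       \<and> (comm_group H \<and> sectional_number G H f < \<infinity> \<longrightarrow>
          (\<exists>(K :: 'b set monoid) \<phi>.
            group K \<and> finite (carrier K) \<and> \<not> cyclic_group K \<and>
            \<phi> \<in> hom H K \<and> \<phi> ` carrier H = carrier K \<and>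
            (\<forall>b \<in> carrier K. b \<noteq> \<one>\<^bsub>K\<^esub> \<longrightarrow>
               has_local_section G H f {h \<in> carrier H. \<phi> h \<in> generate K {b}})))"
  proof (intro conjI allI impI)
  fix K :: "'c monoid" and \<phi>
  assume h: "group K \<and> finite (carrier K) \<and> \<not> cyclic_group K \<and>
            \<phi> \<in> hom H K \<and> \<phi> ` carrier H = carrier K \<and>
            (\<forall>b \<in> carrier K. b \<noteq> \<one>\<^bsub>K\<^esub> \<longrightarrow>
               has_local_section G H f {h \<in> carrier H. \<phi> h \<in> generate K {b}})"
  then show "sectional_number G H f < \<infinity>"
    by (elim conjE) (rule part1[OF assms(2)], assumption+)
next
  assume "comm_group H \<and> sectional_number G H f < \<infinity>"
  then show "\<exists>(K :: 'b set monoid) \<phi>.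
            group K \<and> finite (carrier K) \<and> \<not> cyclic_group K \<and>
            \<phi> \<in> hom H K \<and> \<phi> ` carrier H = carrier K \<and>
            (\<forall>b \<in> carrier K. b \<noteq> \<one>\<^bsub>K\<^esub> \<longrightarrow>
               has_local_section G H f {h \<in> carrier H. \<phi> h \<in> generate K {b}})"
    by (elim conjE) (rule part2, assumption+)
qed

end
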